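(* For every integer $t\ge1$, $\liminf_{n\to\infty}\frac{\mathrm{orsat}(n,K_{t+2})}{n^{3/2}}=\frac{\sqrt t}{2}$.
   Context: All graphs are finite and simple. A graph is regular if all vertices have the same degree. For a graph $F$, a graph $G$ is $F$-oversaturated if for every pair $e$ of non-adjacent vertices of $G$, the graph obtained from $G$ by adding the edge $e$ contains a copy of $F$ that uses the edge $e$ ($G$ itself need not be $F$-free). $\mathrm{orsat}(n,F)$ denotes the smallest number of edges of a regular $n$-vertex $F$-oversaturated graph. $K_r$ denotes the complete graph on $r$ vertices. *)

theory Defs
  imports Complex_Main "HOL-Library.Liminf_Limsup" "HOL-Library.Extended_Real"
begin

definition simple_graph :: "nat \<Rightarrow> nat set set \<Rightarrow> bool" where
  "simple_graph n E \<longleftrightarrow> (\<forall>e\<in>E. e \<subseteq> {..<n} \<and> card e = 2)"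

definition degree :: "nat set set \<Rightarrow> nat \<Rightarrow> nat" where
  "degree E v = card {e \<in> E. v \<in> e}"

definition regular_graph :: "nat \<Rightarrow> nat set set \<Rightarrow> bool" where
  "regular_graph n E \<longleftrightarrow> (\<forall>u<n. \<forall>v<n. degree E u = degree E v)"

definition has_clique_using :: "nat \<Rightarrow> nat set set \<Rightarrow> nat \<Rightarrow> nat \<Rightarrow> nat \<Rightarrow> bool" where
  "has_clique_using n E' r u v \<longleftrightarrow>
     (\<exists>S. S \<subseteq> {..<n} \<and> card S = r \<and> u \<in> S \<and> v \<in> S \<and>
          (\<forall>x\<in>S. \<forall>y\<in>S. x \<noteq> y \<longrightarrow> {x, y} \<in> E'))"

definition clique_oversaturated :: "nat \<Rightarrow> nat \<Rightarrow> nat set set \<Rightarrow> bool" where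
  "clique_oversaturated r n E \<longleftrightarrow>
     (\<forall>u<n. \<forall>v<n. u \<noteq> v \<and> {u, v} \<notin> E \<longrightarrow> has_clique_using n (insert {u, v} E) r u v)"

text \<open>orsat(n, K_r): minimum number of edges of a regular n-vertex K_r-oversaturated graph
(the complete graph always qualifies, so the set is nonempty).\<close>

definition orsat_clique :: "nat \<Rightarrow> nat \<Rightarrow> nat" where
  "orsat_clique n r = Min {card E | E. simple_graph n E \<and> regular_graph n E \<and> clique_oversaturated r n E}"

end

theory Submission
  imports Defs "HOL-Computational_Algebra.Primes" "HOL-Real_Asymp.Real_Asymp"
begin


lemma sg_finite: "simple_graph n E \<Longrightarrow> finite E"
  unfolding simple_graph_def
  by (rule finite_subset[of _ "Pow {..<n}"]) auto

lemma handshake: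
  assumes "simple_graph n E"
  shows "(\<Sum>v<n. degree E v) = 2 * card E"
proof -
  have fin: "finite E" using sg_finite[OF assms] .
  have "(\<Sum>v<n. degree E v) = (\<Sum>v<n. \<Sum>e\<in>E. if v \<in> e then 1 else 0)"
    unfolding degree_def by (simp add: sum.If_cases fin Int_def conj_commute)
  also have "\<dots> = (\<Sum>e\<in>E. \<Sum>v<n. if v \<in> e then 1 else 0)"
    by (rule sum.swap)
  also have "\<dots> = (\<Sum>e\<in>E. card e)"
  proof (rule sum.cong)
    fix e assume "e \<in> E"
    then have "e \<subseteq> {..<n}" using assms unfolding simple_graph_def by auto
    then have "{..<n} \<inter> e = e" by auto
    then show "(\<Sum>v<n. if v \<in> e then 1 else 0) = card e"
      by (simp add: sum.If_cases)
  qed simp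
  also have "\<dots> = (\<Sum>e\<in>E. 2)"
    using assms unfolding simple_graph_def by (intro sum.cong) auto
  finally show ?thesis by simp
qed

lemma regular_card:
  assumes "simple_graph n E" "regular_graph n E" "v < n"
  shows "n * degree E v = 2 * card E"
proof -
  have "(\<Sum>u<n. degree E u) = (\<Sum>u<n. degree E v)"
  proof (rule sum.cong)
    fix u assume "u \<in> {..<n}"
    then show "degree E u = degree E v" using assms(2,3) unfolding regular_graph_def by blast
  qed simp
  then show ?thesis using handshake[OF assms(1)] by simp
qed

definition nbr :: "nat \<Rightarrow> nat set set \<Rightarrow> nat \<Rightarrow> nat set" where
  "nbr n E v = {u. u < n \<and> {u, v} \<in> E}"

lemma degree_nbr:
  assumes "simple_graph n E"
  shows "degree E v = card (nbr n E v)"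
proof -
  have "bij_betw (\<lambda>u. {u, v}) (nbr n E v) {e \<in> E. v \<in> e}"
  proof (rule bij_betwI')
    fix x y assume "x \<in> nbr n E v" "y \<in> nbr n E v"
    then show "({x, v} = {y, v}) = (x = y)"
      by (auto simp: doubleton_eq_iff)
  next
    fix x assume "x \<in> nbr n E v"
    then show "{x, v} \<in> {e \<in> E. v \<in> e}" unfolding nbr_def by auto
  next
    fix e assume e: "e \<in> {e \<in> E. v \<in> e}"
    then have c: "card e = 2" "e \<subseteq> {..<n}" using assms unfolding simple_graph_def by auto
    obtain a b where ab: "e = {a, b}" "a \<noteq> b" using c(1) unfolding card_2_iff by blast
    with e have "v = a \<or> v = b" by auto
    then obtain u where u: "e = {u, v}" "u \<noteq> v"
    proof
      assume "v = a" then show ?thesis using that[of b] ab by (simp add: insert_commute)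
    next
      assume "v = b" then show ?thesis using that[of a] ab by simp
    qed
    have "u < n" using u c by auto
    then have "u \<in> nbr n E v" using u e unfolding nbr_def by simp
    then show "\<exists>x\<in>nbr n E v. e = {x, v}" using u by blast
  qed
  then show ?thesis unfolding degree_def by (simp add: bij_betw_same_card)
qed

lemma nbr_sub: "nbr n E v \<subseteq> {..<n}" unfolding nbr_def by auto

lemma nbr_irrefl: "simple_graph n E \<Longrightarrow> v \<notin> nbr n E v"
  unfolding nbr_def simple_graph_def by auto

lemma nbr_sym: "u \<in> nbr n E v \<Longrightarrow> v < n \<Longrightarrow> v \<in> nbr n E u"
  unfolding nbr_def by (auto simp: insert_commute)

lemma common_nbrs:
  assumes sg: "simple_graph n E" and os: "clique_oversaturated (t+2) n E"
    and uv: "u < n" "v < n" "u \<noteq> v" "{u, v} \<notin> E"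
  shows "t \<le> card (nbr n E u \<inter> nbr n E v)"
proof -
  have "has_clique_using n (insert {u, v} E) (t+2) u v"
    using os uv unfolding clique_oversaturated_def by blast
  then obtain S where S: "S \<subseteq> {..<n}" "card S = t + 2" "u \<in> S" "v \<in> S"
    "\<forall>x\<in>S. \<forall>y\<in>S. x \<noteq> y \<longrightarrow> {x, y} \<in> insert {u, v} E"
    unfolding has_clique_using_def by blast
  have fS: "finite S" using S(1) finite_subset by blast
  have ct: "card (S - {u, v}) = t" using S uv(3) fS by (simp add: card_Diff_subset)
  have sub: "S - {u, v} \<subseteq> nbr n E u \<inter> nbr n E v"
  proof
    fix w assume w: "w \<in> S - {u, v}"
    then have wS: "w \<in> S" "w \<noteq> u" "w \<noteq> v" by auto
    have "{w, u} \<in> insert {u, v} E" using S(5) wS S(3) by blast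
    moreover have "{w, v} \<in> insert {u, v} E" using S(5) wS S(4) by blast
    moreover have "{w, u} \<noteq> {u, v}" "{w, v} \<noteq> {u, v}" using wS uv(3) by (auto simp: doubleton_eq_iff)
    ultimately have "{w, u} \<in> E" "{w, v} \<in> E" by auto
    then show "w \<in> nbr n E u \<inter> nbr n E v" using w S(1) unfolding nbr_def by auto
  qed
  have "finite (nbr n E u \<inter> nbr n E v)" using nbr_sub[of n E u] finite_subset by blast
  from card_mono[OF this sub] ct show ?thesis by simp
qed

lemma deg_lower:
  assumes sg: "simple_graph n E" and os: "clique_oversaturated (t+2) n E"
    and rg: "regular_graph n E" and v: "v < n"
  shows "t * (n - 1 - degree E v) \<le> degree E v * (degree E v - 1)"
proof -
  define N where "N = nbr n E v"
  define d where "d = degree E v"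
  have dN: "d = card N" unfolding N_def d_def using degree_nbr[OF sg] .
  define M where "M = {..<n} - insert v N"
  have fN: "finite N" unfolding N_def using nbr_sub[of n E v] finite_subset by blast
  have fM: "finite M" unfolding M_def by simp
  have NS: "insert v N \<subseteq> {..<n}" using v nbr_sub unfolding N_def by auto
  have vN: "v \<notin> N" unfolding N_def using nbr_irrefl[OF sg] .
  have cM: "card M = n - 1 - d"
    unfolding M_def dN using NS vN fN by (simp add: card_Diff_subset)
  have "t * card M = (\<Sum>u\<in>M. t)" by simp
  also have "\<dots> \<le> (\<Sum>u\<in>M. card (nbr n E u \<inter> N))"
  proof (rule sum_mono)
    fix u assume u: "u \<in> M"
    then have "u < n" "u \<noteq> v" "{u, v} \<notin> E" unfolding M_def N_def nbr_def by auto
    then show "t \<le> card (nbr n E u \<inter> N)" unfolding N_def by (rule common_nbrs[OF sg os _ v])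
  qed
  also have "\<dots> = (\<Sum>u\<in>M. \<Sum>w\<in>N. if w \<in> nbr n E u then 1 else 0)"
    using fN by (simp add: sum.If_cases Int_commute)
  also have "\<dots> = (\<Sum>w\<in>N. \<Sum>u\<in>M. if w \<in> nbr n E u then 1 else 0)"
    by (rule sum.swap)
  also have "\<dots> = (\<Sum>w\<in>N. card {u \<in> M. w \<in> nbr n E u})"
    using fM by (simp add: sum.If_cases Int_def conj_commute)
  also have "\<dots> \<le> (\<Sum>w\<in>N. d - 1)"
  proof (rule sum_mono)
    fix w assume w: "w \<in> N"
    then have wn: "w < n" unfolding N_def nbr_def by auto
    have sub: "{u \<in> M. w \<in> nbr n E u} \<subseteq> nbr n E w - {v}"
    proof
      fix u assume "u \<in> {u \<in> M. w \<in> nbr n E u}"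
      then have u: "u \<in> M" "w \<in> nbr n E u" by auto
      then have "u < n" "u \<noteq> v" unfolding M_def by auto
      then show "u \<in> nbr n E w - {v}" using nbr_sym[OF u(2)] by simp
    qed
    have vw: "v \<in> nbr n E w" using nbr_sym[OF w[unfolded N_def] v] .
    have "degree E w = degree E v" using rg v wn unfolding regular_graph_def by blast
    then have "card (nbr n E w) = d" unfolding d_def using degree_nbr[OF sg, of w] by simp
    then have "card (nbr n E w - {v}) = d - 1" using vw by simp
    moreover have "finite (nbr n E w - {v})" using nbr_sub[of n E w] finite_subset by blast
    ultimately show "card {u \<in> M. w \<in> nbr n E u} \<le> d - 1" using card_mono[OF _ sub] by simp
  qed
  also have "\<dots> = d * (d - 1)" using dN by simp
  finally show ?thesis using cM d_def by simp
qed




lemma orsat_fin: "finite {card E | E. simple_graph n E \<and> regular_graph n E \<and> clique_oversaturated r n E}"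
proof (rule finite_subset[of _ "{..card (Pow {..<n::nat})}"])
  show "{card E | E. simple_graph n E \<and> regular_graph n E \<and> clique_oversaturated r n E} \<subseteq> {..card (Pow {..<n})}"
  proof
    fix x assume "x \<in> {card E | E. simple_graph n E \<and> regular_graph n E \<and> clique_oversaturated r n E}"
    then obtain E where "x = card E" "simple_graph n E" by blast
    moreover then have "E \<subseteq> Pow {..<n}" unfolding simple_graph_def by auto
    ultimately show "x \<in> {..card (Pow {..<n})}" using card_mono[of "Pow {..<n}" E] by auto
  qed
qed simp

definition Kn :: "nat \<Rightarrow> nat set set" where "Kn n = {e. e \<subseteq> {..<n} \<and> card e = 2}"

lemma Kn_ok: "simple_graph n (Kn n) \<and> regular_graph n (Kn n) \<and> clique_oversaturated r n (Kn n)"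
proof (intro conjI)
  show sg: "simple_graph n (Kn n)" unfolding simple_graph_def Kn_def by auto
  show "clique_oversaturated r n (Kn n)" unfolding clique_oversaturated_def Kn_def by auto
  have "\<And>v. v < n \<Longrightarrow> degree (Kn n) v = n - 1"
  proof -
    fix v assume v: "v < n"
    have "nbr n (Kn n) v = {..<n} - {v}" unfolding nbr_def Kn_def using v by (auto simp: card_2_iff)
    then show "degree (Kn n) v = n - 1" using degree_nbr[OF sg] v by simp
  qed
  then show "regular_graph n (Kn n)" unfolding regular_graph_def by simp
qed

lemma orsat_attained:
  "\<exists>E. simple_graph n E \<and> regular_graph n E \<and> clique_oversaturated r n E \<and> card E = orsat_clique n r"
proof -
  let ?S = "{card E | E. simple_graph n E \<and> regular_graph n E \<and> clique_oversaturated r n E}"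
  have "card (Kn n) \<in> ?S" using Kn_ok by blast
  then have "?S \<noteq> {}" by blast
  then have "orsat_clique n r \<in> ?S" unfolding orsat_clique_def using Min_in[OF orsat_fin] by blast
  then show ?thesis by force
qed

lemma orsat_le:
  assumes "simple_graph n E" "regular_graph n E" "clique_oversaturated r n E"
  shows "orsat_clique n r \<le> card E"
  unfolding orsat_clique_def using assms by (intro Min_le[OF orsat_fin]) blast

lemma orsat_lower:
  assumes n: "n \<ge> 1"
  shows "real n * (sqrt (real t * (real n - 1)) - real t) \<le> 2 * real (orsat_clique n (t+2))"
proof -
  obtain E where E: "simple_graph n E" "regular_graph n E" "clique_oversaturated (t+2) n E"
     "card E = orsat_clique n (t+2)" using orsat_attained by blast
  define d where "d = degree E 0"
  have h: "n * d = 2 * card E" unfolding d_def using regular_card[OF E(1,2)] n by simp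
  have l: "t * (n - 1 - d) \<le> d * (d - 1)" unfolding d_def using deg_lower[OF E(1,3,2)] n by simp
  have "nbr n E 0 \<subseteq> {..<n} - {0}" using nbr_sub nbr_irrefl[OF E(1)] by blast
  then have "card (nbr n E 0) \<le> n - 1" using card_mono[of "{..<n} - {0}" "nbr n E 0"] n by simp
  then have dn: "d \<le> n - 1" unfolding d_def using degree_nbr[OF E(1)] by simp
  have "t * (n - 1) \<le> d * d + t * d"
  proof -
    have e: "n - 1 = (n - 1 - d) + d" using dn by simp
    have "t * (n - 1) = t * (n - 1 - d) + t * d" by (metis e distrib_left)
    also have "\<dots> \<le> d * (d - 1) + t * d" using l by simp
    also have "\<dots> \<le> d * d + t * d" by (simp add: mult_le_mono)
    finally show ?thesis .
  qed
  then have r: "real t * (real n - 1) \<le> real d * real d + real t * real d"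
    using n by (metis (mono_tags, lifting) of_nat_1 of_nat_add of_nat_diff of_nat_le_iff of_nat_mult)
  have "sqrt (real t * (real n - 1)) - real t \<le> real d"
  proof (rule ccontr)
    assume "\<not> ?thesis"
    then have a: "real d + real t < sqrt (real t * (real n - 1))" by simp
    have "0 \<le> real d + real t" by simp
    then have "(real d + real t)^2 < (sqrt (real t * (real n - 1)))^2"
      using a by (intro power_strict_mono) auto
    also have "\<dots> = real t * (real n - 1)" using n by simp
    finally have "(real d + real t)^2 < real t * (real n - 1)" .
    moreover have "0 \<le> real t * real t + real d * real t" by simp
    moreover have "(real d + real t)^2 = real d * real d + real t * real d + (real t * real t + real d * real t)"
      by (simp add: power2_eq_square algebra_simps)
    ultimately show False using r by linarith
  qed
  then have "real n * (sqrt (real t * (real n - 1)) - real t) \<le> real n * real d"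
    by (intro mult_left_mono) auto
  also have "\<dots> = 2 * real (orsat_clique n (t+2))" using h E(4)
    by (metis of_nat_mult of_nat_numeral)
  finally show ?thesis .
qed




lemma orsat_upper:
  fixes V :: "'a set" and R :: "'a \<Rightarrow> 'a \<Rightarrow> bool"
  assumes fin: "finite V" and sym: "\<And>x y. R x y \<Longrightarrow> R y x" and irr: "\<And>x. \<not> R x x"
    and deg: "\<And>x. x \<in> V \<Longrightarrow> card {y\<in>V. R x y} = d"
    and os: "\<And>x y. x \<in> V \<Longrightarrow> y \<in> V \<Longrightarrow> x \<noteq> y \<Longrightarrow> \<not> R x y \<Longrightarrow>
       \<exists>C\<subseteq>V. card C = t \<and> x \<notin> C \<and> y \<notin> C \<and> (\<forall>z\<in>C. R x z \<and> R y z) \<and> (\<forall>z\<in>C. \<forall>w\<in>C. z \<noteq> w \<longrightarrow> R z w)"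
  shows "2 * orsat_clique (card V) (t+2) \<le> card V * d"
proof -
  define n where "n = card V"
  obtain g where g: "bij_betw g V {0..<n}" unfolding n_def using ex_bij_betw_finite_nat[OF fin] by blast
  have ginj: "inj_on g V" using g bij_betw_def by blast
  have gim: "g ` V = {..<n}" using g unfolding bij_betw_def by auto
  define E where "E = (\<lambda>(x,y). {g x, g y}) ` {(x,y). x \<in> V \<and> y \<in> V \<and> R x y}"
  have memE: "{g x, g y} \<in> E \<longleftrightarrow> R x y" if xy: "x \<in> V" "y \<in> V" for x y
  proof
    assume "R x y" then show "{g x, g y} \<in> E" unfolding E_def using xy by force
  next
    assume "{g x, g y} \<in> E"
    then obtain x' y' where x'y': "x' \<in> V" "y' \<in> V" "R x' y'" "{g x, g y} = {g x', g y'}"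
      unfolding E_def by auto
    then have "(g x = g x' \<and> g y = g y') \<or> (g x = g y' \<and> g y = g x')" by (auto simp: doubleton_eq_iff)
    then have "(x = x' \<and> y = y') \<or> (x = y' \<and> y = x')"
      using ginj xy x'y'(1,2) unfolding inj_on_def by blast
    then show "R x y" using x'y'(3) sym by blast
  qed
  have sg: "simple_graph n E"
    unfolding simple_graph_def
  proof
    fix e assume "e \<in> E"
    then obtain x y where xy: "x \<in> V" "y \<in> V" "R x y" "e = {g x, g y}" unfolding E_def by auto
    then have "x \<noteq> y" using irr by blast
    then have "g x \<noteq> g y" using ginj xy unfolding inj_on_def by blast
    then show "e \<subseteq> {..<n} \<and> card e = 2" using xy gim by auto
  qed
  have nb: "nbr n E (g x) = g ` {y\<in>V. R x y}" if x: "x \<in> V" for x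
  proof
    show "nbr n E (g x) \<subseteq> g ` {y\<in>V. R x y}"
    proof
      fix u assume u: "u \<in> nbr n E (g x)"
      then have "u \<in> g ` V" using gim unfolding nbr_def by auto
      then obtain y where y: "y \<in> V" "u = g y" by blast
      then have "{g y, g x} \<in> E" using u unfolding nbr_def by simp
      then have "R y x" using memE y x by blast
      then show "u \<in> g ` {y\<in>V. R x y}" using sym y by blast
    qed
  next
    show "g ` {y\<in>V. R x y} \<subseteq> nbr n E (g x)"
    proof
      fix u assume "u \<in> g ` {y\<in>V. R x y}"
      then obtain y where y: "y \<in> V" "R x y" "u = g y" by blast
      then have "{g y, g x} \<in> E" using memE x sym by blast
      moreover have "g y < n" using gim y by auto
      ultimately show "u \<in> nbr n E (g x)" unfolding nbr_def using y by simp
    qed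
  qed
  have dg: "degree E (g x) = d" if x: "x \<in> V" for x
  proof -
    have "inj_on g {y\<in>V. R x y}" using ginj by (rule inj_on_subset) auto
    then show ?thesis using degree_nbr[OF sg] nb[OF x] deg[OF x] by (simp add: card_image)
  qed
  have dg': "degree E u = d" if "u < n" for u
  proof -
    from that gim obtain x where "x \<in> V" "u = g x" by (metis imageE lessThan_iff)
    then show ?thesis using dg by simp
  qed
  have rg: "regular_graph n E" unfolding regular_graph_def using dg' by simp
  have ov: "clique_oversaturated (t+2) n E"
    unfolding clique_oversaturated_def
  proof (intro allI impI)
    fix u v assume uv: "u < n" "v < n" "u \<noteq> v \<and> {u, v} \<notin> E"
    from uv gim obtain x where x: "x \<in> V" "u = g x" by (metis imageE lessThan_iff)
    from uv gim obtain y where y: "y \<in> V" "v = g y" by (metis imageE lessThan_iff)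
    have xy: "x \<noteq> y" using uv x y by blast
    have nR: "\<not> R x y" using memE[OF x(1) y(1)] uv x y by blast
    obtain C where C: "C \<subseteq> V" "card C = t" "x \<notin> C" "y \<notin> C" "\<forall>z\<in>C. R x z \<and> R y z"
       "\<forall>z\<in>C. \<forall>w\<in>C. z \<noteq> w \<longrightarrow> R z w" using os[OF x(1) y(1) xy nR] by blast
    define S where "S = insert u (insert v (g ` C))"
    have fC: "finite C" using C(1) fin finite_subset by blast
    have cgC: "card (g ` C) = t" using C(1,2) ginj by (simp add: card_image inj_on_subset)
    have uC: "u \<notin> g ` C" using x C(1,3) ginj unfolding inj_on_def by blast
    have vC: "v \<notin> g ` C" using y C(1,4) ginj unfolding inj_on_def by blast
    have cS: "card S = t + 2" unfolding S_def using uC vC uv(3) cgC fC by simp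
    have SS: "S \<subseteq> {..<n}" unfolding S_def using uv(1,2) C(1) gim by auto
    have pw: "\<forall>a\<in>S. \<forall>b\<in>S. a \<noteq> b \<longrightarrow> {a, b} \<in> insert {u, v} E"
    proof (intro ballI impI)
      fix a b assume ab: "a \<in> S" "b \<in> S" "a \<noteq> b"
      have edge: "{g p, g q} \<in> insert {u, v} E" if "p \<in> V" "q \<in> V" "R p q" for p q
        using memE that by blast
      consider "a = u" | "a = v" | "a \<in> g ` C" using ab unfolding S_def by blast
      then show "{a, b} \<in> insert {u, v} E"
      proof cases
        case 1
        consider "b = v" | "b \<in> g ` C" using ab 1 unfolding S_def by blast
        then show ?thesis
        proof cases
          case 2 then obtain z where "z \<in> C" "b = g z" by blast
          then show ?thesis using edge[of x z] C x 1 by blast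
        qed (simp add: 1)
      next
        case 2
        consider "b = u" | "b \<in> g ` C" using ab 2 unfolding S_def by blast
        then show ?thesis
        proof cases
          case 2 then obtain z where "z \<in> C" "b = g z" by blast
          then show ?thesis using edge[of y z] C y \<open>a = v\<close> by blast
        qed (simp add: 2 insert_commute)
      next
        case 3 then obtain z where z: "z \<in> C" "a = g z" by blast
        consider "b = u" | "b = v" | "b \<in> g ` C" using ab unfolding S_def by blast
        then show ?thesis
        proof cases
          case 1 then show ?thesis using edge[of z x] C x z sym by blast
        next
          case 2 then show ?thesis using edge[of z y] C y z sym by blast
        next
          case 3 then obtain w where w: "w \<in> C" "b = g w" by blast
          then have "z \<noteq> w" using z ab(3) by blast
          then have "R z w" using C(6) z(1) w(1) by blast
          moreover have "z \<in> V" "w \<in> V" using C(1) z(1) w(1) by auto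
          ultimately show ?thesis using edge[of z w] z(2) w(2) by simp
        qed
      qed
    qed
    show "has_clique_using n (insert {u, v} E) (t + 2) u v"
      unfolding has_clique_using_def using cS SS pw unfolding S_def by blast
  qed
  have "orsat_clique n (t+2) \<le> card E" using orsat_le[OF sg rg ov] .
  moreover have "n * d = 2 * card E"
  proof (cases "n = 0")
    case True
    then have "V = {}" unfolding n_def using fin by simp
    then show ?thesis unfolding E_def using True by simp
  next
    case False
    then show ?thesis using regular_card[OF sg rg, of 0] dg'[of 0] by simp
  qed
  ultimately show ?thesis unfolding n_def by simp
qed




lemma blowup:
  fixes VH :: "'a set" and adj :: "'a \<Rightarrow> 'a \<Rightarrow> bool"
  assumes fin: "finite VH" and sym: "\<And>x y. adj x y \<Longrightarrow> adj y x" and irr: "\<And>x. \<not> adj x x"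
    and deg: "\<And>x. x \<in> VH \<Longrightarrow> card {y\<in>VH. adj x y} = k"
    and cn: "\<And>x y. x \<in> VH \<Longrightarrow> y \<in> VH \<Longrightarrow> x \<noteq> y \<Longrightarrow> \<not> adj x y \<Longrightarrow> \<exists>z\<in>VH. adj x z \<and> adj y z"
    and t: "t \<ge> 1"
  shows "2 * orsat_clique (t * card VH) (t+2) \<le> (t * card VH) * ((t - 1) + t * k)"
proof -
  define V where "V = VH \<times> {..<t}"
  define R where "R = (\<lambda>(x::'a, i::nat) (y, j). (x = y \<and> i \<noteq> j) \<or> adj x y)"
  have cV: "card V = t * card VH" unfolding V_def by (simp add: card_cartesian_product)
  have fV: "finite V" unfolding V_def using fin by simp
  have "2 * orsat_clique (card V) (t+2) \<le> card V * ((t - 1) + t * k)"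
  proof (rule orsat_upper[OF fV])
    show "\<And>x y. R x y \<Longrightarrow> R y x" unfolding R_def using sym by auto
    show "\<And>x. \<not> R x x" unfolding R_def using irr by auto
  next
    fix p assume p: "p \<in> V"
    obtain x i where xi: "p = (x, i)" by (cases p)
    have x: "x \<in> VH" "i < t" using p xi unfolding V_def by auto
    have eq: "{q\<in>V. R p q} = ({x} \<times> ({..<t} - {i})) \<union> ({y\<in>VH. adj x y} \<times> {..<t})"
      unfolding V_def R_def xi using x irr by auto
    have disj: "({x} \<times> ({..<t} - {i})) \<inter> ({y\<in>VH. adj x y} \<times> {..<t}) = {}" using irr by auto
    have f1: "finite ({x} \<times> ({..<t} - {i}))" by simp
    have f2: "finite ({y\<in>VH. adj x y} \<times> {..<t})" using fin by simp
    have "card {q\<in>V. R p q} = card ({x} \<times> ({..<t} - {i})) + card ({y\<in>VH. adj x y} \<times> {..<t})"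
      unfolding eq using card_Un_disjoint[OF f1 f2 disj] .
    also have "\<dots> = (t - 1) + t * k" using x deg[OF x(1)] by (simp add: card_cartesian_product mult.commute)
    finally show "card {q\<in>V. R p q} = (t - 1) + t * k" .
  next
    fix p q assume pq: "p \<in> V" "q \<in> V" "p \<noteq> q" "\<not> R p q"
    obtain x i where xi: "p = (x, i)" by (cases p)
    obtain y j where yj: "q = (y, j)" by (cases q)
    have xy: "x \<in> VH" "y \<in> VH" "i < t" "j < t" using pq xi yj unfolding V_def by auto
    have nxy: "x \<noteq> y" "\<not> adj x y" using pq xi yj unfolding R_def by auto
    obtain z where z: "z \<in> VH" "adj x z" "adj y z" using cn[OF xy(1,2) nxy] by blast
    define C where "C = {z} \<times> {..<t}"
    have "C \<subseteq> V" "card C = t" unfolding C_def V_def using z by (auto simp: card_cartesian_product)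
    moreover have "p \<notin> C" "q \<notin> C" unfolding C_def xi yj using z irr by auto
    moreover have "\<forall>c\<in>C. R p c \<and> R q c" unfolding C_def R_def xi yj using z by auto
    moreover have "\<forall>c\<in>C. \<forall>w\<in>C. c \<noteq> w \<longrightarrow> R c w" unfolding C_def R_def by auto
    ultimately show "\<exists>C\<subseteq>V. card C = t \<and> p \<notin> C \<and> q \<notin> C \<and> (\<forall>z\<in>C. R p z \<and> R q z) \<and> (\<forall>z\<in>C. \<forall>w\<in>C. z \<noteq> w \<longrightarrow> R z w)"
      by blast
  qed
  then show ?thesis using cV by simp
qed




locale oddp =
  fixes P :: int
  assumes pr: "prime P" and p2: "P > 2"
begin

lemma Ppos: "P > 0" using p2 by simp

lemma L1: "0 \<le> d \<Longrightarrow> d < P \<Longrightarrow> (P dvd (d - z) \<longleftrightarrow> d = z mod P)"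
proof -
  assume d: "0 \<le> d" "d < P"
  have "d mod P = d" using d by simp
  then show ?thesis using mod_eq_dvd_iff[of d P z] by auto
qed

lemma L2: "0 \<le> b \<Longrightarrow> b < P \<Longrightarrow> P dvd (2 * b) \<Longrightarrow> b = 0"
proof -
  assume b: "0 \<le> b" "b < P" "P dvd (2 * b)"
  have "\<not> P dvd 2" using p2 by (auto dest: zdvd_imp_le)
  then have "P dvd b" using b(3) pr by (simp add: prime_dvd_mult_iff)
  then show "b = 0" using b(1,2) L1[of b 0] by simp
qed

lemma L3: "P dvd k^2 \<Longrightarrow> P dvd k" using pr prime_dvd_power by blast

lemma L3': "P dvd k * l \<Longrightarrow> P dvd k \<or> P dvd l" using pr by (simp add: prime_dvd_mult_iff)

lemma L4: "\<not> P dvd k \<Longrightarrow> \<exists>e. P dvd (k * e - r)"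
proof -
  assume k: "\<not> P dvd k"
  then have "coprime P k" using pr prime_imp_coprime by blast
  then have "gcd k P = 1" by (simp add: coprime_iff_gcd_eq_1 gcd.commute)
  then obtain u v where uv: "u * k + v * P = 1" using bezout_int[of k P] by auto
  have "k * (r * u) - r = r * (u * k + v * P) - r * v * P - r" by (simp add: algebra_simps)
  also have "\<dots> = - (r * v) * P" using uv by simp
  finally have "k * (r * u) - r = - (r * v) * P" .
  then show ?thesis by (metis dvd_triv_right)
qed

lemma L5: "0 \<le> a \<Longrightarrow> a < P \<Longrightarrow> (a = (- c) mod P \<longleftrightarrow> P dvd (a + c))"
  using L1[of a "- c"] by simp

lemma L6: "0 \<le> a \<Longrightarrow> a < P \<Longrightarrow> 0 \<le> c \<Longrightarrow> c < P \<Longrightarrow> P dvd (a - c) \<Longrightarrow> a = c"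
  using L1[of a c] by simp

end



definition VH :: "int \<Rightarrow> (int \<times> int) set" where
  "VH P = ({0..<P} \<times> {0..<P}) \<union> ({0..<P} \<times> {P}) \<union> {(P, P)}"

definition lp :: "int \<Rightarrow> int \<Rightarrow> int \<Rightarrow> bool" where
  "lp P a b \<longleftrightarrow> P dvd (b + b - (a + a)^2)"

fun base :: "int \<Rightarrow> int \<times> int \<Rightarrow> int \<times> int \<Rightarrow> bool" where
  "base P (a, b) (c, d) \<longleftrightarrow>
     (b < P \<and> d < P \<and> P dvd (b + d - (a + c)^2))
   \<or> (b < P \<and> d < P \<and> lp P a b \<and> a \<noteq> 0 \<and> c = (- a) mod P \<and> d = b)
   \<or> (b < P \<and> d = P \<and> c = a)
   \<or> (b = P \<and> a < P \<and> c = P \<and> d = P)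
   \<or> (a = 0 \<and> b = 0 \<and> c = P \<and> d = P)"

declare base.simps [simp del]

definition adjH :: "int \<Rightarrow> int \<times> int \<Rightarrow> int \<times> int \<Rightarrow> bool" where
  "adjH P x y \<longleftrightarrow> x \<in> VH P \<and> y \<in> VH P \<and> x \<noteq> y \<and> (base P x y \<or> base P y x)"

context oddp begin

lemma match_sym:
  assumes a: "0 \<le> a" "a < P" and c: "0 \<le> c" "c < P"
    and m: "lp P a b" "a \<noteq> 0" "c = (- a) mod P"
  shows "lp P c b \<and> c \<noteq> 0 \<and> a = (- c) mod P"
proof -
  have ac: "P dvd (c + a)" using L5[OF c, of a] m(3) by simp
  then have "a = (- c) mod P" using L5[OF a, of c] by (simp add: add.commute)
  moreover have "c \<noteq> 0"
  proof
    assume "c = 0" then have "P dvd a" using ac by simp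
    then have "P dvd (a - 0)" by simp
    then have "a = 0" using L6[OF a] Ppos by simp
    then show False using m(2) by simp
  qed
  moreover have "lp P c b"
  proof -
    have "(b + b - (c + c)^2) = (b + b - (a + a)^2) - 4 * (c - a) * (c + a)"
      by (simp add: power2_eq_square algebra_simps)
    moreover have "P dvd 4 * (c - a) * (c + a)" using ac by simp
    ultimately show ?thesis using m(1) unfolding lp_def by (metis dvd_diff)
  qed
  ultimately show ?thesis by simp
qed

lemma lp0: "0 \<le> b \<Longrightarrow> b < P \<Longrightarrow> lp P 0 b \<longleftrightarrow> b = 0"
proof -
  assume b: "0 \<le> b" "b < P"
  have "b + b - (0 + 0)^2 = 2 * b" by simp
  then have "lp P 0 b \<longleftrightarrow> P dvd (2 * b)" unfolding lp_def by simp
  then show ?thesis using L2[OF b] by auto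
qed

lemma sum_iff: "0 \<le> d \<Longrightarrow> d < P \<Longrightarrow> P dvd (b + d - (a + c)^2) \<longleftrightarrow> d = ((a + c)^2 - b) mod P"
proof -
  assume d: "0 \<le> d" "d < P"
  have e: "b + d - (a + c)^2 = d - ((a + c)^2 - b)" by simp
  show ?thesis unfolding e by (rule L1[OF d])
qed

definition Sx where "Sx a b = (\<lambda>c. (c, ((a + c)^2 - b) mod P)) ` {0..<P}"
definition part where "part a b = (if a = 0 then (P, P) else ((- a) mod P, b))"

lemma Sx_mem: "0 \<le> c \<Longrightarrow> c < P \<Longrightarrow> 0 \<le> d \<Longrightarrow> d < P \<Longrightarrow> (c, d) \<in> Sx a b \<longleftrightarrow> P dvd (b + d - (a + c)^2)"
  unfolding Sx_def using sum_iff by auto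

lemma Sx_sub: "Sx a b \<subseteq> {0..<P} \<times> {0..<P}"
  unfolding Sx_def using Ppos by auto

lemma Sx_card: "card (Sx a b) = nat P"
proof -
  have "inj_on (\<lambda>c. (c, ((a + c)^2 - b) mod P)) {0..<P}" by (auto simp: inj_on_def)
  then show ?thesis unfolding Sx_def by (simp add: card_image)
qed

end


context oddp begin

lemma inA: "0 \<le> c \<Longrightarrow> c < P \<Longrightarrow> 0 \<le> d \<Longrightarrow> d < P \<Longrightarrow> (c, d) \<in> VH P"
  unfolding VH_def by auto
lemma inHb: "0 \<le> c \<Longrightarrow> c < P \<Longrightarrow> (c, P) \<in> VH P"
  unfolding VH_def by auto
lemma inI: "(P, P) \<in> VH P"
  unfolding VH_def by auto

lemma VH_cases:
  assumes "(c, d) \<in> VH P"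
  obtains "0 \<le> c" "c < P" "0 \<le> d" "d < P" | "0 \<le> c" "c < P" "d = P" | "c = P" "d = P"
  using assms unfolding VH_def by auto

lemma modr: "0 \<le> x mod P" "x mod P < P" using Ppos by auto

lemma neg_mod_ne:
  assumes x: "0 \<le> a" "a < P" and a: "a \<noteq> 0"
  shows "(- a) mod P \<noteq> a"
proof
  assume h: "(- a) mod P = a"
  have "a = (- a) mod P \<longleftrightarrow> P dvd (a + a)" by (rule L5[OF x(1,2)])
  with h have "P dvd (a + a)" by simp
  then have "P dvd (2 * a)" by (simp only: mult_2)
  then have "a = 0" by (rule L2[OF x(1,2)])
  with a show False by contradiction
qed

lemma part_props:
  assumes x: "0 \<le> a" "a < P" "0 \<le> b" "b < P" and l: "lp P a b"
  shows "part a b \<in> VH P" "part a b \<noteq> (a, b)" "part a b \<notin> Sx a b" "part a b \<noteq> (a, P)"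
proof -
  have m1: "0 \<le> (- a) mod P" "(- a) mod P < P" by (rule modr)+
  show "part a b \<in> VH P"
  proof (cases "a = 0")
    case True then show ?thesis unfolding part_def using inI by simp
  next
    case False then show ?thesis unfolding part_def using inA[OF m1 x(3,4)] by simp
  qed
  show "part a b \<noteq> (a, P)" unfolding part_def using x by auto
  show "part a b \<noteq> (a, b)"
  proof (cases "a = 0")
    case True then show ?thesis unfolding part_def using x by auto
  next
    case False
    then show ?thesis unfolding part_def using neg_mod_ne[OF x(1,2) False] by auto
  qed
  show "part a b \<notin> Sx a b"
  proof (cases "a = 0")
    case True
    have "(P, P) \<notin> Sx a b" using Sx_sub[of a b] by auto
    then show ?thesis unfolding part_def using True by simp
  next
    case False
    show ?thesis
    proof
      assume "part a b \<in> Sx a b"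
      then have m: "((- a) mod P, b) \<in> Sx a b" unfolding part_def using False by simp
      define q where "q = a + (- a) mod P"
      have d1: "P dvd (b + b - q^2)" using Sx_mem[OF m1 x(3,4)] m unfolding q_def by blast
      have "(- a) mod P = (- a) mod P \<longleftrightarrow> P dvd ((- a) mod P + a)" by (rule L5[OF m1])
      then have "P dvd ((- a) mod P + a)" by (rule iffD1) (rule refl)
      then have "P dvd q" unfolding q_def by (simp only: add.commute)
      then have d2: "P dvd q^2" unfolding power2_eq_square by (rule dvd_mult2)
      have "P dvd ((b + b - q^2) + q^2)" using d1 d2 by (rule dvd_add)
      then have "P dvd (2 * b)" by (simp only: mult_2 diff_add_cancel)
      then have "b = 0" by (rule L2[OF x(3,4)])
      then have "P dvd (a + a)^2" using l unfolding lp_def by simp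
      then have "P dvd (a + a)" by (rule L3)
      then have "P dvd (2 * a)" by (simp only: mult_2)
      then have "a = 0" by (rule L2[OF x(1,2)])
      then show False using False by contradiction
    qed
  qed
qed

lemma mA:
  assumes x: "0 \<le> a" "a < P" "0 \<le> b" "b < P" and y: "0 \<le> c" "c < P" "0 \<le> d" "d < P"
  shows "adjH P (a, b) (c, d) \<longleftrightarrow>
    ((c, d) \<in> Sx a b \<and> (c, d) \<noteq> (a, b)) \<or> (lp P a b \<and> a \<noteq> 0 \<and> c = (- a) mod P \<and> d = b)"
proof -
  have vx: "(a, b) \<in> VH P" and vy: "(c, d) \<in> VH P" using inA x y by auto
  have ne: "d \<noteq> P" "b \<noteq> P" "c \<noteq> P" "a \<noteq> P" using x y by auto
  have b1: "base P (a, b) (c, d) \<longleftrightarrow> P dvd (b + d - (a + c)^2) \<or> (lp P a b \<and> a \<noteq> 0 \<and> c = (- a) mod P \<and> d = b)"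
    unfolding base.simps using x(4) y(4) ne by blast
  have b2: "base P (c, d) (a, b) \<longleftrightarrow> P dvd (d + b - (c + a)^2) \<or> (lp P c d \<and> c \<noteq> 0 \<and> a = (- c) mod P \<and> b = d)"
    unfolding base.simps using x(4) y(4) ne by blast
  have sw: "d + b - (c + a)^2 = b + d - (a + c)^2" by (simp only: add.commute)
  have ms: "(lp P c d \<and> c \<noteq> 0 \<and> a = (- c) mod P \<and> b = d) \<Longrightarrow> (lp P a b \<and> a \<noteq> 0 \<and> c = (- a) mod P \<and> d = b)"
  proof -
    assume h: "lp P c d \<and> c \<noteq> 0 \<and> a = (- c) mod P \<and> b = d"
    then have "lp P c b" by simp
    from match_sym[OF y(1,2) x(1,2) this] h show ?thesis by blast
  qed
  have ne2: "(lp P a b \<and> a \<noteq> 0 \<and> c = (- a) mod P \<and> d = b) \<Longrightarrow> (c, d) \<noteq> (a, b)"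
  proof -
    assume h: "lp P a b \<and> a \<noteq> 0 \<and> c = (- a) mod P \<and> d = b"
    then have h1: "c = (- a) mod P" and h2: "a \<noteq> 0" by auto
    have "c \<noteq> a" unfolding h1 by (rule neg_mod_ne[OF x(1,2) h2])
    then show "(c, d) \<noteq> (a, b)" by simp
  qed
  have sm: "(c, d) \<in> Sx a b \<longleftrightarrow> P dvd (b + d - (a + c)^2)" by (rule Sx_mem[OF y])
  have "adjH P (a, b) (c, d) \<longleftrightarrow> (a, b) \<noteq> (c, d) \<and> (base P (a, b) (c, d) \<or> base P (c, d) (a, b))"
    unfolding adjH_def using vx vy by blast
  moreover have "(a, b) \<noteq> (c, d) \<longleftrightarrow> (c, d) \<noteq> (a, b)" by auto
  ultimately have A: "adjH P (a, b) (c, d) \<longleftrightarrow> (c, d) \<noteq> (a, b) \<and> (base P (a, b) (c, d) \<or> base P (c, d) (a, b))"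
    by blast
  have taut: "\<And>A N D M M'. (A \<longleftrightarrow> (N \<and> ((D \<or> M) \<or> D \<or> M'))) \<Longrightarrow> (M' \<Longrightarrow> M) \<Longrightarrow> (M \<Longrightarrow> N)
     \<Longrightarrow> A \<longleftrightarrow> (D \<and> N \<or> M)" by blast
  show ?thesis unfolding sm by (rule taut[OF A[unfolded b1 b2 sw] ms ne2])
qed

lemma mH:
  assumes x: "0 \<le> a" "a < P" "0 \<le> b" "b < P" and y: "0 \<le> c" "c < P"
  shows "adjH P (a, b) (c, P) \<longleftrightarrow> c = a"
proof -
  have ne: "b \<noteq> P" "c \<noteq> P" "a \<noteq> P" "\<not> P < P" "P \<noteq> 0" using x y by auto
  have "base P (a, b) (c, P) \<longleftrightarrow> c = a" unfolding base.simps using x(4) ne by blast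
  moreover have "\<not> base P (c, P) (a, b)" unfolding base.simps using ne by blast
  moreover have "(a, b) \<noteq> (c, P)" using ne by simp
  ultimately show ?thesis unfolding adjH_def using inA[OF x] inHb[OF y] by blast
qed

lemma mI:
  assumes x: "0 \<le> a" "a < P" "0 \<le> b" "b < P"
  shows "adjH P (a, b) (P, P) \<longleftrightarrow> a = 0 \<and> b = 0"
proof -
  have ne: "b \<noteq> P" "a \<noteq> P" "\<not> P < P" "P \<noteq> 0" using x by auto
  have "base P (a, b) (P, P) \<longleftrightarrow> a = 0 \<and> b = 0" unfolding base.simps using x(4) ne by blast
  moreover have "\<not> base P (P, P) (a, b)" unfolding base.simps using ne by blast
  moreover have "(a, b) \<noteq> (P, P)" using ne by simp
  ultimately show ?thesis unfolding adjH_def using inA[OF x] inI by blast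
qed

lemma nbA:
  assumes x: "0 \<le> a" "a < P" "0 \<le> b" "b < P"
  shows "{y \<in> VH P. adjH P (a, b) y} =
     (if lp P a b then insert (part a b) (insert (a, P) (Sx a b - {(a, b)})) else insert (a, P) (Sx a b - {(a, b)}))"
  (is "?L = ?R")
proof (rule set_eqI)
  fix y :: "int \<times> int"
  obtain c d where y: "y = (c, d)" by (cases y)
  show "y \<in> ?L \<longleftrightarrow> y \<in> ?R"
  proof (cases "(c, d) \<in> VH P")
    case False
    have "?R \<subseteq> VH P" using part_props(1)[OF x] inHb[OF x(1,2)] Sx_sub[of a b] inA by auto
    then show ?thesis using False y by auto
  next
    case True
    then show ?thesis
    proof (cases rule: VH_cases)
      case 1
      have "(c, d) \<noteq> (a, P)" using 1 by auto
      moreover have "lp P a b \<Longrightarrow> (c, d) = part a b \<longleftrightarrow> a \<noteq> 0 \<and> (c, d) = ((- a) mod P, b)"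
        unfolding part_def using 1 by auto
      ultimately show ?thesis using mA[OF x 1] y True by auto
    next
      case 2
      have "(c, d) \<notin> Sx a b" using Sx_sub[of a b] 2 by auto
      moreover have "lp P a b \<Longrightarrow> (c, d) \<noteq> part a b" unfolding part_def using 2 x by auto
      ultimately show ?thesis using mH[OF x 2(1,2)] y True 2 by auto
    next
      case 3
      have "(c, d) \<notin> Sx a b" using Sx_sub[of a b] 3 by auto
      moreover have "(c, d) \<noteq> (a, P)" using 3 x by auto
      moreover have "lp P a b \<and> (c, d) = part a b \<longleftrightarrow> a = 0 \<and> b = 0"
        unfolding part_def using 3 x lp0 Ppos by auto
      ultimately show ?thesis using mI[OF x] y True 3 by auto
    qed
  qed
qed

lemma degA:
  assumes x: "0 \<le> a" "a < P" "0 \<le> b" "b < P"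
  shows "card {y \<in> VH P. adjH P (a, b) y} = nat P + 1"
proof -
  have fS: "finite (Sx a b)" unfolding Sx_def by simp
  have hS: "(a, P) \<notin> Sx a b" using Sx_sub[of a b] by auto
  have self: "(a, b) \<in> Sx a b \<longleftrightarrow> lp P a b" using Sx_mem[OF x(1,2) x(3,4)] unfolding lp_def by simp
  show ?thesis
  proof (cases "lp P a b")
    case True
    have c1: "card (Sx a b - {(a, b)}) = nat P - 1" using Sx_card self True fS by simp
    have "card (insert (a, P) (Sx a b - {(a, b)})) = nat P" using c1 hS fS Ppos by simp
    moreover have "part a b \<notin> insert (a, P) (Sx a b - {(a, b)})" using part_props[OF x True] by auto
    ultimately show ?thesis unfolding nbA[OF x] using True fS by simp
  next
    case False
    have c1: "card (Sx a b - {(a, b)}) = nat P" using Sx_card self False by simp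
    show ?thesis unfolding nbA[OF x] using False c1 hS fS by simp
  qed
qed

end


context oddp begin

lemma adj_sym: "adjH P x y \<longleftrightarrow> adjH P y x" unfolding adjH_def by blast

lemma mHH: assumes "0 \<le> a" "a < P" "0 \<le> c" "c < P" shows "\<not> adjH P (a, P) (c, P)"
proof -
  have ne: "a \<noteq> P" "c \<noteq> P" "\<not> P < P" "P \<noteq> 0" using assms by auto
  have "\<not> base P (a, P) (c, P)" "\<not> base P (c, P) (a, P)" unfolding base.simps using ne by blast+
  then show ?thesis unfolding adjH_def by blast
qed

lemma mHI: assumes "0 \<le> a" "a < P" shows "adjH P (a, P) (P, P)"
proof -
  have "base P (a, P) (P, P)" unfolding base.simps using assms by blast
  moreover have "(a, P) \<noteq> (P, P)" using assms by simp
  ultimately show ?thesis unfolding adjH_def using inHb[OF assms] inI by blast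
qed

lemma nbH:
  assumes a: "0 \<le> a" "a < P"
  shows "{y \<in> VH P. adjH P (a, P) y} = insert (P, P) ((\<lambda>d. (a, d)) ` {0..<P})" (is "?L = ?R")
proof (rule set_eqI)
  fix y :: "int \<times> int"
  obtain c d where y: "y = (c, d)" by (cases y)
  show "y \<in> ?L \<longleftrightarrow> y \<in> ?R"
  proof (cases "(c, d) \<in> VH P")
    case False
    have "?R \<subseteq> VH P" using inI inA a by auto
    then show ?thesis using False y by auto
  next
    case True
    then show ?thesis
    proof (cases rule: VH_cases)
      case 1
      have "adjH P (a, P) (c, d) \<longleftrightarrow> a = c" using mH[OF 1 a] adj_sym by blast
      then show ?thesis using y 1 True by auto
    next
      case 2
      then show ?thesis using mHH[OF a 2(1,2)] y True a by auto
    next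
      case 3
      then show ?thesis using mHI[OF a] y True by auto
    qed
  qed
qed

lemma degH: assumes a: "0 \<le> a" "a < P" shows "card {y \<in> VH P. adjH P (a, P) y} = nat P + 1"
proof -
  have "card ((\<lambda>d. (a, d)) ` {0..<P}) = nat P" by (simp add: card_image inj_on_def)
  moreover have "(P, P) \<notin> (\<lambda>d. (a, d)) ` {0..<P}" by auto
  ultimately show ?thesis unfolding nbH[OF a] by simp
qed

lemma nbI:
  shows "{y \<in> VH P. adjH P (P, P) y} = insert (0, 0) ((\<lambda>c. (c, P)) ` {0..<P})" (is "?L = ?R")
proof (rule set_eqI)
  fix y :: "int \<times> int"
  obtain c d where y: "y = (c, d)" by (cases y)
  show "y \<in> ?L \<longleftrightarrow> y \<in> ?R"
  proof (cases "(c, d) \<in> VH P")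
    case False
    have "?R \<subseteq> VH P" using inHb inA Ppos by auto
    then show ?thesis using False y by auto
  next
    case True
    then show ?thesis
    proof (cases rule: VH_cases)
      case 1
      have "adjH P (P, P) (c, d) \<longleftrightarrow> c = 0 \<and> d = 0" using mI[OF 1] adj_sym by blast
      then show ?thesis using y 1 True by auto
    next
      case 2
      then show ?thesis using mHI[OF 2(1,2)] adj_sym y True Ppos by auto
    next
      case 3
      then show ?thesis using y True Ppos unfolding adjH_def by auto
    qed
  qed
qed

lemma degI: "card {y \<in> VH P. adjH P (P, P) y} = nat P + 1"
proof -
  have "card ((\<lambda>c. (c, P)) ` {0..<P}) = nat P" by (simp add: card_image inj_on_def)
  moreover have "(0, 0) \<notin> (\<lambda>c. (c, P)) ` {0..<P}" using Ppos by auto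
  ultimately show ?thesis unfolding nbI by simp
qed

lemma deg_all: "x \<in> VH P \<Longrightarrow> card {y \<in> VH P. adjH P x y} = nat P + 1"
proof -
  assume x: "x \<in> VH P"
  obtain a b where ab: "x = (a, b)" by (cases x)
  from x[unfolded ab] show ?thesis
  proof (cases rule: VH_cases)
    case 1 then show ?thesis using degA ab by simp
  next
    case 2 then show ?thesis using degH ab by simp
  next
    case 3 then show ?thesis using degI ab by simp
  qed
qed

end



lemma ident: "d + f - (c + e)^2 = (f - ((a + e)^2 - b)) + (2 * (a - c) * e0 - (b - d - (a - c) * (a + c))) + 2 * (a - c) * (e - e0)"
  for a b c d e f e0 :: int
  by (simp add: algebra_simps power2_eq_square)

context oddp begin

lemma notdvd2: "\<not> P dvd 2" using p2 by (auto dest: zdvd_imp_le)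

lemma dvd_modP: "P dvd (x mod P - x)"
proof -
  have "(x mod P) mod P = x mod P" by simp
  then show ?thesis using mod_eq_dvd_iff[of "x mod P" P x] by simp
qed

lemma inSx: "0 \<le> e \<Longrightarrow> e < P \<Longrightarrow> (e, ((a + e)^2 - b) mod P) \<in> Sx a b"
  unfolding Sx_def by auto

lemma cn_AA:
  assumes x: "0 \<le> a" "a < P" "0 \<le> b" "b < P" and y: "0 \<le> c" "c < P" "0 \<le> d" "d < P"
    and ne: "(a, b) \<noteq> (c, d)" and na: "\<not> adjH P (a, b) (c, d)"
  shows "\<exists>z\<in>VH P. adjH P (a, b) z \<and> adjH P (c, d) z"
proof (cases "a = c")
  case True
  then show ?thesis using mH[OF x x(1,2)] mH[OF y x(1,2)] inHb[OF x(1,2)] by auto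
next
  case False
  have nd: "\<not> P dvd (2 * (a - c))"
  proof
    assume "P dvd (2 * (a - c))"
    then have "P dvd 2 \<or> P dvd (a - c)" by (rule L3')
    then have "P dvd (a - c)" using notdvd2 by blast
    then have "a = c" by (rule L6[OF x(1,2) y(1,2)])
    then show False using False by contradiction
  qed
  obtain e0 where e0: "P dvd (2 * (a - c) * e0 - (b - d - (a - c) * (a + c)))"
    using L4[OF nd] by blast
  define e where "e = e0 mod P"
  define f where "f = ((a + e)^2 - b) mod P"
  have er: "0 \<le> e" "e < P" unfolding e_def by (rule modr)+
  have fr: "0 \<le> f" "f < P" unfolding f_def by (rule modr)+
  have zS: "(e, f) \<in> Sx a b" unfolding f_def by (rule inSx[OF er])
  have d1: "P dvd (f - ((a + e)^2 - b))" unfolding f_def by (rule dvd_modP)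
  have d2: "P dvd (e - e0)" unfolding e_def by (rule dvd_modP)
  then have d2': "P dvd (2 * (a - c) * (e - e0))" by (rule dvd_mult)
  have "P dvd ((f - ((a + e)^2 - b)) + (2 * (a - c) * e0 - (b - d - (a - c) * (a + c))) + 2 * (a - c) * (e - e0))"
    using d1 e0 d2' by (intro dvd_add)
  then have "P dvd (d + f - (c + e)^2)" unfolding ident[of d f c e a b e0] .
  then have zS2: "(e, f) \<in> Sx c d" using Sx_mem[OF er fr] by blast
  have zx: "(e, f) \<noteq> (a, b)"
  proof
    assume h: "(e, f) = (a, b)"
    then have "(a, b) \<in> Sx c d" using zS2 by simp
    moreover have "(a, b) \<noteq> (c, d)" using ne .
    ultimately have "adjH P (c, d) (a, b)" using mA[OF y x] by blast
    then show False using na adj_sym by blast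
  qed
  have zy: "(e, f) \<noteq> (c, d)"
  proof
    assume h: "(e, f) = (c, d)"
    then have "(c, d) \<in> Sx a b" using zS by simp
    then have "adjH P (a, b) (c, d)" using mA[OF x y] ne by auto
    then show False using na by blast
  qed
  have "adjH P (a, b) (e, f)" using mA[OF x er fr] zS zx by blast
  moreover have "adjH P (c, d) (e, f)" using mA[OF y er fr] zS2 zy by blast
  moreover have "(e, f) \<in> VH P" using inA[OF er fr] .
  ultimately show ?thesis by blast
qed

lemma cn_AH:
  assumes x: "0 \<le> a" "a < P" "0 \<le> b" "b < P" and y: "0 \<le> c" "c < P"
    and na: "\<not> adjH P (a, b) (c, P)"
  shows "\<exists>z\<in>VH P. adjH P (a, b) z \<and> adjH P (c, P) z"
proof -
  have ca: "c \<noteq> a" using mH[OF x y] na by blast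
  define f where "f = ((a + c)^2 - b) mod P"
  have fr: "0 \<le> f" "f < P" unfolding f_def by (rule modr)+
  have zS: "(c, f) \<in> Sx a b" unfolding f_def by (rule inSx[OF y])
  have "(c, f) \<noteq> (a, b)" using ca by simp
  then have "adjH P (a, b) (c, f)" using mA[OF x y(1,2) fr] zS by blast
  moreover have "adjH P (c, P) (c, f)" using mH[OF y fr y] adj_sym by blast
  moreover have "(c, f) \<in> VH P" using inA[OF y fr] .
  ultimately show ?thesis by blast
qed

lemma cn_AI:
  assumes x: "0 \<le> a" "a < P" "0 \<le> b" "b < P"
  shows "\<exists>z\<in>VH P. adjH P (a, b) z \<and> adjH P (P, P) z"
proof -
  have "adjH P (a, b) (a, P)" using mH[OF x x(1,2)] by simp
  moreover have "adjH P (P, P) (a, P)" using mHI[OF x(1,2)] adj_sym by blast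
  ultimately show ?thesis using inHb[OF x(1,2)] by blast
qed

lemma cn_HH:
  assumes "0 \<le> a" "a < P" "0 \<le> c" "c < P"
  shows "\<exists>z\<in>VH P. adjH P (a, P) z \<and> adjH P (c, P) z"
  using mHI[OF assms(1,2)] mHI[OF assms(3,4)] inI by blast

lemma cn_all:
  assumes x: "x \<in> VH P" and y: "y \<in> VH P" and ne: "x \<noteq> y" and na: "\<not> adjH P x y"
  shows "\<exists>z\<in>VH P. adjH P x z \<and> adjH P y z"
proof -
  obtain a b where ab: "x = (a, b)" by (cases x)
  obtain c d where cd: "y = (c, d)" by (cases y)
  have na': "\<not> adjH P y x" using na adj_sym by blast
  from x[unfolded ab] show ?thesis
  proof (cases rule: VH_cases)
    case 1
    note X = 1
    from y[unfolded cd] show ?thesis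
    proof (cases rule: VH_cases)
      case 1
      then show ?thesis using cn_AA[OF X 1] ne na ab cd by blast
    next
      case 2
      then show ?thesis using cn_AH[OF X 2(1,2)] na ab cd by blast
    next
      case 3
      then show ?thesis using cn_AI[OF X] ab cd by blast
    qed
  next
    case 2
    note X = 2
    from y[unfolded cd] show ?thesis
    proof (cases rule: VH_cases)
      case 1
      then show ?thesis using cn_AH[OF 1 X(1,2)] na' ab cd X by blast
    next
      case 2
      then show ?thesis using cn_HH[OF X(1,2) 2(1,2)] ab cd X by blast
    next
      case 3
      then show ?thesis using mHI[OF X(1,2)] na ab cd X by blast
    qed
  next
    case 3
    note X = 3
    from y[unfolded cd] show ?thesis
    proof (cases rule: VH_cases)
      case 1
      then show ?thesis using cn_AI[OF 1] ab cd X by blast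
    next
      case 2
      then show ?thesis using mHI[OF 2(1,2)] na' ab cd X by blast
    next
      case 3
      then show ?thesis using ne ab cd X by blast
    qed
  qed
qed

lemma card_VH: "card (VH P) = nat P * nat P + nat P + 1"
proof -
  have d1: "({0..<P} \<times> {0..<P}) \<inter> ({0..<P} \<times> {P}) = {}" by auto
  have d2: "(P, P) \<notin> ({0..<P} \<times> {0..<P}) \<union> ({0..<P} \<times> {P})" by auto
  have "card (({0..<P} \<times> {0..<P}) \<union> ({0..<P} \<times> {P})) = nat P * nat P + nat P"
    using card_Un_disjoint[OF _ _ d1] by (simp add: card_cartesian_product)
  then show ?thesis unfolding VH_def using d2 by simp
qed

lemma fin_VH: "finite (VH P)" unfolding VH_def by simp

end


lemma H_exists:
  assumes "prime (p::nat)" "p > 2"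
  shows "\<exists>(VH :: (int \<times> int) set) adj. finite VH \<and> card VH = p^2 + p + 1 \<and> (\<forall>x y. adj x y \<longrightarrow> adj y x)
     \<and> (\<forall>x. \<not> adj x x) \<and> (\<forall>x\<in>VH. card {y\<in>VH. adj x y} = p + 1)
     \<and> (\<forall>x\<in>VH. \<forall>y\<in>VH. x \<noteq> y \<and> \<not> adj x y \<longrightarrow> (\<exists>z\<in>VH. adj x z \<and> adj y z))"
proof -
  interpret oddp "int p" using assms by unfold_locales auto
  have "finite (VH (int p))" by (rule fin_VH)
  moreover have "card (VH (int p)) = p^2 + p + 1" using card_VH by (simp add: power2_eq_square)
  moreover have "\<forall>x y. adjH (int p) x y \<longrightarrow> adjH (int p) y x" using adj_sym by blast
  moreover have "\<forall>x. \<not> adjH (int p) x x" unfolding adjH_def by blast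
  moreover have "\<forall>x\<in>VH (int p). card {y\<in>VH (int p). adjH (int p) x y} = p + 1" using deg_all by simp
  moreover have "\<forall>x\<in>VH (int p). \<forall>y\<in>VH (int p). x \<noteq> y \<and> \<not> adjH (int p) x y \<longrightarrow> (\<exists>z\<in>VH (int p). adjH (int p) x z \<and> adjH (int p) y z)"
    using cn_all by blast
  ultimately show ?thesis by blast
qed

lemma upper_prime:
  assumes "prime (p::nat)" "p > 2" "t \<ge> 1"
  shows "2 * orsat_clique (t * (p^2 + p + 1)) (t+2) \<le> (t * (p^2 + p + 1)) * ((t - 1) + t * (p + 1))"
proof -
  obtain VH :: "(int \<times> int) set" and adj where H: "finite VH" "card VH = p^2 + p + 1" "\<forall>x y. adj x y \<longrightarrow> adj y x"
     "\<forall>x. \<not> adj x x" "\<forall>x\<in>VH. card {y\<in>VH. adj x y} = p + 1"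
     "\<forall>x\<in>VH. \<forall>y\<in>VH. x \<noteq> y \<and> \<not> adj x y \<longrightarrow> (\<exists>z\<in>VH. adj x z \<and> adj y z)"
    using H_exists[OF assms(1,2)] by blast
  show ?thesis using blowup[of VH adj "p+1" t] H assms(3) by auto
qed

theorem theorem1p5:
  fixes t :: nat
  assumes "t \<ge> 1"
  shows "liminf (\<lambda>n. ereal (real (orsat_clique n (t + 2)) / real n powr (3/2)))
           = ereal (sqrt (real t) / 2)"
proof -
  define X where "X = (\<lambda>n. ereal (real (orsat_clique n (t + 2)) / real n powr (3/2)))"
  define lo where "lo = (\<lambda>n::nat. (sqrt (real t * (real n - 1)) - real t) / (2 * sqrt (real n)))"
  have pw: "real n powr (3/2) = real n * sqrt (real n)" if "n \<ge> 1" for n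
  proof -
    have "real n powr (3/2) = real n powr (1 + 1/2)" by simp
    also have "\<dots> = real n powr 1 * real n powr (1/2)" by (rule powr_add)
    also have "\<dots> = real n * real n powr (1/2)" using that by simp
    also have "\<dots> = real n * sqrt (real n)" using that by (simp add: powr_half_sqrt)
    finally show ?thesis .
  qed
  have lim: "(lo \<longlongrightarrow> sqrt (real t) / 2) at_top"
  proof -
    have "(lo \<longlongrightarrow> real t powr (1/2) / 2) at_top" unfolding lo_def using assms by real_asymp
    then show ?thesis by (simp add: powr_half_sqrt)
  qed
  have low: "ereal (lo n) \<le> X n" if n: "n \<ge> 1" for n
  proof -
    have a: "real n * (sqrt (real t * (real n - 1)) - real t) \<le> 2 * real (orsat_clique n (t+2))"
      using orsat_lower[OF n] .
    have sp: "sqrt (real n) > 0" using n by simp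
    have np: "real n > 0" using n by simp
    have "lo n = (real n * (sqrt (real t * (real n - 1)) - real t)) / (2 * (real n * sqrt (real n)))"
      unfolding lo_def using np by (simp add: field_simps)
    also have "\<dots> \<le> (2 * real (orsat_clique n (t+2))) / (2 * (real n * sqrt (real n)))"
      using a sp np by (intro divide_right_mono) auto
    also have "\<dots> = real (orsat_clique n (t + 2)) / real n powr (3/2)" using pw[OF n] by simp
    finally show ?thesis unfolding X_def by simp
  qed
  have ge: "ereal (sqrt (real t) / 2) \<le> liminf X"
  proof -
    have "liminf (\<lambda>n. ereal (lo n)) = ereal (sqrt (real t) / 2)"
      using lim by (intro lim_imp_Liminf) auto
    moreover have "liminf (\<lambda>n. ereal (lo n)) \<le> liminf X"
      using low by (intro Liminf_mono) (auto simp: eventually_at_top_linorder)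
    ultimately show ?thesis by simp
  qed
  have le: "liminf X \<le> ereal (sqrt (real t) / 2)"
  proof (rule ereal_le_epsilon2)
    fix e :: real assume e: "0 < e"
    show "liminf X \<le> ereal (sqrt (real t) / 2) + ereal e"
    proof (rule ccontr)
      assume "\<not> ?thesis"
      then have "ereal (sqrt (real t) / 2 + e) < liminf X" by simp
      then have "eventually (\<lambda>n. X n > ereal (sqrt (real t) / 2 + e)) sequentially"
        by (rule less_LiminfD)
      then obtain N where N: "\<And>n. n \<ge> N \<Longrightarrow> X n > ereal (sqrt (real t) / 2 + e)"
        unfolding eventually_at_top_linorder by blast
      obtain p :: nat where p: "prime p" "p > N + 2 + nat \<lceil>sqrt (real t) / e\<rceil>"
        using bigger_prime by blast
      define n where "n = t * (p^2 + p + 1)"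
      have p2: "p > 2" using p by simp
      have pe: "real p > sqrt (real t) / e"
      proof -
        have "sqrt (real t) / e \<le> real (nat \<lceil>sqrt (real t) / e\<rceil>)" by linarith
        also have "\<dots> < real p" using p by linarith
        finally show ?thesis .
      qed
      have nN: "n \<ge> N"
      proof -
        have "N \<le> p" using p by simp
        also have "p \<le> p^2 + p + 1" by simp
        also have "\<dots> \<le> n" unfolding n_def using assms by (metis mult_1 mult_le_mono1)
        finally show ?thesis .
      qed
      have n1: "n \<ge> 1" unfolding n_def using assms by simp
      have ub: "2 * orsat_clique n (t+2) \<le> n * ((t - 1) + t * (p + 1))"
        unfolding n_def using upper_prime[OF p(1) p2 assms] .
      have ub': "2 * real (orsat_clique n (t+2)) \<le> real n * (real t * real p + 2 * real t)"
      proof -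
        have "real (2 * orsat_clique n (t+2)) \<le> real (n * ((t - 1) + t * (p + 1)))"
          using ub by (simp only: of_nat_le_iff)
        also have "\<dots> \<le> real (n * (t * p + 2 * t))"
          by (simp only: of_nat_le_iff) (intro mult_left_mono, auto)
        also have "\<dots> = real n * (real t * real p + 2 * real t)" by simp
        finally show ?thesis by simp
      qed
      have sp: "sqrt (real n) \<ge> sqrt (real t) * real p"
      proof -
        have "real t * (real p)^2 \<le> real n" unfolding n_def by (simp add: algebra_simps)
        then have "sqrt (real t * (real p)^2) \<le> sqrt (real n)" by (rule real_sqrt_le_mono)
        then show ?thesis by (simp add: real_sqrt_mult)
      qed
      have tp: "sqrt (real t) > 0" "real p > 0" using assms p2 by auto
      have "real (orsat_clique n (t + 2)) / real n powr (3/2)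
            = (2 * real (orsat_clique n (t+2))) / (2 * real n * sqrt (real n))" using pw[OF n1] by simp
      also have "\<dots> \<le> (real n * (real t * real p + 2 * real t)) / (2 * real n * sqrt (real n))"
        using ub' n1 by (intro divide_right_mono) auto
      also have "\<dots> = (real t * real p + 2 * real t) / (2 * sqrt (real n))" using n1 by simp
      also have "\<dots> \<le> (real t * real p + 2 * real t) / (2 * (sqrt (real t) * real p))"
      proof (rule divide_left_mono)
        show "2 * (sqrt (real t) * real p) \<le> 2 * sqrt (real n)" using sp by simp
        show "0 \<le> real t * real p + 2 * real t" by simp
        have "0 < sqrt (real n)" using n1 by simp
        then show "0 < 2 * sqrt (real n) * (2 * (sqrt (real t) * real p))" using tp by simp
      qed
      also have "\<dots> = sqrt (real t) / 2 + sqrt (real t) / real p"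
      proof -
        have e: "real t = sqrt (real t) * sqrt (real t)" by simp
        have "\<And>s q::real. s > 0 \<Longrightarrow> q > 0 \<Longrightarrow> (s * s * q + 2 * (s * s)) / (2 * (s * q)) = s / 2 + s / q"
          by (simp add: field_simps)
        from this[OF tp] show ?thesis by (subst (1 2) e) simp
      qed
      also have "\<dots> < sqrt (real t) / 2 + e"
      proof -
        have "sqrt (real t) < e * real p" using pe e by (simp add: field_simps)
        then have "sqrt (real t) / real p < e" using tp by (simp add: field_simps)
        then show ?thesis by simp
      qed
      finally have "X n < ereal (sqrt (real t) / 2 + e)" unfolding X_def by simp
      with N[OF nN] show False by simp
    qed
  qed
  show ?thesis using ge le unfolding X_def by (rule antisym[rotated])
qed


end
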